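(* (Subject reduction for NLPCF.) If $\Gamma;\Delta\vdash e:\tau$ and $e\rightsquigarrow e'$, then $\Gamma;\Delta\vdash e':\tau$.
   Context: NLPCF is LPCF extended with non-determinism. Types: $\tau ::= \mathsf{Nat}\mid\mathsf{Bool}\mid \tau\,\&\,\tau' \mid \tau\otimes\tau' \mid \tau\multimap\tau' \mid \tau\to\tau'\mid\mathsf{T}\tau$. Terms: $e ::= x \mid \mathtt{0},\mathtt{1},\dots \mid \mathtt{succ}\mid\mathtt{pred}\mid\mathtt{iszero} \mid \lambda x.e \mid e\,e' \mid \mathtt{true}\mid\mathtt{false} \mid \mathtt{if}\ e_1\ \mathtt{then}\ e_2\ \mathtt{else}\ e_3 \mid \langle e_1,e_2\rangle \mid \mathtt{proj}_i(e) \mid \mathtt{fix}_\tau \mid e_1\otimes e_2 \mid \mathtt{let}\ x\otimes y = e\ \mathtt{in}\ e' \mid \mathtt{val}(e)\mid \mathtt{bind}\ x\Leftarrow e\ \mathtt{in}\ e'\mid e\sqcap e'$, up to $\alpha$-equivalence, with capture-avoiding substitution. Typing judgements $\Gamma;\Delta\vdash e:\tau$ ($\Gamma$ non-linear, $\Delta$ linear environments, disjoint domains; $\Delta,\Delta'$ disjoint union): $\Gamma;\emptyset\vdash x:\tau$ if $x:\tau\in\Gamma$; $\Gamma;x:\tau\vdash x:\tau$ if $x\notin\Gamma$; $\Gamma;\emptyset\vdash\mathtt{fix}_\tau:(\tau\to\tau)\to\tau$; numerals $:\mathsf{Nat}$, $\mathtt{true},\mathtt{false}:\mathsf{Bool}$,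 $\mathtt{succ},\mathtt{pred}:\mathsf{Nat}\multimap\mathsf{Nat}$, $\mathtt{iszero}:\mathsf{Nat}\multimap\mathsf{Bool}$ (all with empty $\Delta$); from $\Gamma;\Delta\vdash e_1:\mathsf{Bool}$, $\Gamma;\Delta'\vdash e_2:\tau$, $\Gamma;\Delta'\vdash e_3:\tau$ infer $\Gamma;\Delta,\Delta'\vdash\mathtt{if}\ e_1\ \mathtt{then}\ e_2\ \mathtt{else}\ e_3:\tau$; from $\Gamma;\Delta\vdash e_i:\tau_i$ infer $\Gamma;\Delta\vdash\langle e_1,e_2\rangle:\tau_1\&\tau_2$; from $\Gamma;\Delta\vdash e:\tau_1\&\tau_2$ infer $\Gamma;\Delta\vdash\mathtt{proj}_i(e):\tau_i$; from $\Gamma;\Delta_i\vdash e_i:\tau_i$ infer $\Gamma;\Delta_1,\Delta_2\vdash e_1\otimes e_2:\tau_1\otimes\tau_2$; from $\Gamma;\Delta,x:\tau_1,y:\tau_2\vdash e:\tau$ and $\Gamma;\Delta'\vdash e':\tau_1\otimes\tau_2$ infer $\Gamma;\Delta,\Delta'\vdash\mathtt{let}\ x\otimes y=e'\ \mathtt{in}\ e:\tau$; from $\Gamma,x:\tau;\Delta\vdash e:\tau'$ infer $\Gamma;\Delta\vdash\lambda x.e:\tau\to\tau'$; from $\Gamma;\Delta\vdash e:\tau'\to\tau$, $\Gamma;\emptyset\vdash e':\tau'$ infer $\Gamma;\Delta\vdash e\,e':\tau$; from $\Gamma;\Delta,x:\tau\vdash e:\tau'$ infer $\Gamma;\Delta\vdash\lambda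 x.e:\tau\multimap\tau'$; from $\Gamma;\Delta\vdash e:\tau'\multimap\tau$, $\Gamma;\Delta'\vdash e':\tau'$ infer $\Gamma;\Delta,\Delta'\vdash e\,e':\tau$; from $\Gamma;\Delta\vdash e:\tau$ infer $\Gamma;\Delta\vdash\mathtt{val}(e):\mathsf{T}\tau$; from $\Gamma;\emptyset\vdash e_1:\mathsf{T}\tau_1$ and $\Gamma,x:\tau_1;\Delta\vdash e_2:\mathsf{T}\tau_2$ infer $\Gamma;\Delta\vdash\mathtt{bind}\ x\Leftarrow e_1\ \mathtt{in}\ e_2:\mathsf{T}\tau_2$; from $\Gamma;\Delta\vdash e_1:\mathsf{T}\tau_1$ and $\Gamma;\Delta',x:\tau_1\vdash e_2:\mathsf{T}\tau_2$ infer $\Gamma;\Delta,\Delta'\vdash\mathtt{bind}\ x\Leftarrow e_1\ \mathtt{in}\ e_2:\mathsf{T}\tau_2$; from $\Gamma;\Delta\vdash e_i:\mathsf{T}\tau$ ($i=1,2$) infer $\Gamma;\Delta\vdash e_1\sqcap e_2:\mathsf{T}\tau$. One-step reduction $\rightsquigarrow$: least relation containing $(\lambda x.e)e'\rightsquigarrow e[e'/x]$; $\mathtt{fix}_\tau\,e\rightsquigarrow e(\mathtt{fix}_\tau\,e)$; $\mathtt{succ}\,n\rightsquigarrow n+1$; $\mathtt{pred}\,0\rightsquigarrow0$; $\mathtt{pred}\,n\rightsquigarrow n-1$ ($n\ge1$); $\mathtt{iszero}\,0\rightsquigarrow\mathtt{true}$; $\mathtt{iszero}\,n\rightsquigarrow\mathtt{false}$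 ($n\ge1$); $\mathtt{if}\ \mathtt{true}\ \mathtt{then}\ e_1\ \mathtt{else}\ e_2\rightsquigarrow e_1$; $\mathtt{if}\ \mathtt{false}\ \mathtt{then}\ e_1\ \mathtt{else}\ e_2\rightsquigarrow e_2$; $\mathtt{proj}_i\langle e_1,e_2\rangle\rightsquigarrow e_i$; $\mathtt{let}\ x\otimes y=e_1\otimes e_2\ \mathtt{in}\ e\rightsquigarrow e[e_1/x,e_2/y]$; $\mathtt{bind}\ x\Leftarrow\mathtt{val}(e')\ \mathtt{in}\ e\rightsquigarrow(\lambda x.e)e'$ when $e'\not\rightsquigarrow$; $e_1\sqcap e_2\rightsquigarrow e_i$ ($i=1,2$); closed under $\mathcal{E}[e_1]\rightsquigarrow\mathcal{E}[e_2]$ for evaluation contexts $\mathcal{E}::=[\,]\mid\mathtt{succ}(\mathcal{E})\mid\mathtt{pred}(\mathcal{E})\mid\mathtt{iszero}(\mathcal{E})\mid\mathcal{E}\,e\mid\mathtt{if}\ \mathcal{E}\ \mathtt{then}\ e_1\ \mathtt{else}\ e_2\mid\mathtt{proj}_i(\mathcal{E})\mid\mathtt{let}\ x\otimes y=\mathcal{E}\ \mathtt{in}\ e\mid\mathtt{bind}\ x\Leftarrow\mathcal{E}\ \mathtt{in}\ e\mid\mathtt{val}(\mathcal{E})$. *)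

theory Defs
  imports Main
begin

datatype ty =
    TNat
  | TBool
  | With ty ty
  | Tensor ty ty
  | Lolli ty ty
  | Arrow ty ty
  | TMon ty

datatype trm =
    Var nat
  | Num nat
  | Succ
  | Pred
  | IsZero
  | Lam trm
  | App trm trm
  | TT
  | FF
  | If trm trm trm
  | Pair trm trm
  | Proj1 trm
  | Proj2 trm
  | Fix ty
  | Tens trm trm
  | LetTens trm trm         (* let x \<otimes> y = e' in e : LetTens e' e, x = index 1, y = index 0 in e *)
  | Val trm
  | Bind trm trm            (* bind x <= e1 in e2 : Bind e1 e2, x = index 0 in e2 *)
  | Choice trm trm

primrec lift :: "nat \<Rightarrow> trm \<Rightarrow> trm" where
  "lift k (Var i) = (if i < k then Var i else Var (Suc i))"
| "lift k (Num n) = Num n"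
| "lift k Succ = Succ"
| "lift k Pred = Pred"
| "lift k IsZero = IsZero"
| "lift k (Lam e) = Lam (lift (Suc k) e)"
| "lift k (App e1 e2) = App (lift k e1) (lift k e2)"
| "lift k TT = TT"
| "lift k FF = FF"
| "lift k (If e1 e2 e3) = If (lift k e1) (lift k e2) (lift k e3)"
| "lift k (Pair e1 e2) = Pair (lift k e1) (lift k e2)"
| "lift k (Proj1 e) = Proj1 (lift k e)"
| "lift k (Proj2 e) = Proj2 (lift k e)"
| "lift k (Fix t) = Fix t"
| "lift k (Tens e1 e2) = Tens (lift k e1) (lift k e2)"
| "lift k (LetTens e1 e2) = LetTens (lift k e1) (lift (Suc (Suc k)) e2)"
| "lift k (Val e) = Val (lift k e)"
| "lift k (Bind e1 e2) = Bind (lift k e1) (lift (Suc k) e2)"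
| "lift k (Choice e1 e2) = Choice (lift k e1) (lift k e2)"

text \<open>subst k s e = e[s/k], removing index k (indices above k are decremented).\<close>
primrec subst :: "nat \<Rightarrow> trm \<Rightarrow> trm \<Rightarrow> trm" where
  "subst k s (Var i) = (if i < k then Var i else if i = k then s else Var (i - 1))"
| "subst k s (Num n) = Num n"
| "subst k s Succ = Succ"
| "subst k s Pred = Pred"
| "subst k s IsZero = IsZero"
| "subst k s (Lam e) = Lam (subst (Suc k) (lift 0 s) e)"
| "subst k s (App e1 e2) = App (subst k s e1) (subst k s e2)"
| "subst k s TT = TT"
| "subst k s FF = FF"
| "subst k s (If e1 e2 e3) = If (subst k s e1) (subst k s e2) (subst k s e3)"
| "subst k s (Pair e1 e2) = Pair (subst k s e1) (subst k s e2)"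
| "subst k s (Proj1 e) = Proj1 (subst k s e)"
| "subst k s (Proj2 e) = Proj2 (subst k s e)"
| "subst k s (Fix t) = Fix t"
| "subst k s (Tens e1 e2) = Tens (subst k s e1) (subst k s e2)"
| "subst k s (LetTens e1 e2) = LetTens (subst k s e1) (subst (Suc (Suc k)) (lift 0 (lift 0 s)) e2)"
| "subst k s (Val e) = Val (subst k s e)"
| "subst k s (Bind e1 e2) = Bind (subst k s e1) (subst (Suc k) (lift 0 s) e2)"
| "subst k s (Choice e1 e2) = Choice (subst k s e1) (subst k s e2)"

definition ext :: "ty option \<Rightarrow> (nat \<rightharpoonup> ty) \<Rightarrow> (nat \<rightharpoonup> ty)" where
  "ext a G = (\<lambda>n. case n of 0 \<Rightarrow> a | Suc m \<Rightarrow> G m)"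

inductive typing :: "(nat \<rightharpoonup> ty) \<Rightarrow> (nat \<rightharpoonup> ty) \<Rightarrow> trm \<Rightarrow> ty \<Rightarrow> bool" where
  var_nl: "G x = Some t \<Longrightarrow> typing G Map.empty (Var x) t"
| var_l: "G x = None \<Longrightarrow> typing G [x \<mapsto> t] (Var x) t"
| fixT: "typing G Map.empty (Fix t) (Arrow (Arrow t t) t)"
| num: "typing G Map.empty (Num n) TNat"
| tt: "typing G Map.empty TT TBool"
| ff: "typing G Map.empty FF TBool"
| succ: "typing G Map.empty Succ (Lolli TNat TNat)"
| pred: "typing G Map.empty Pred (Lolli TNat TNat)"
| iszero: "typing G Map.empty IsZero (Lolli TNat TBool)"
| ifte: "\<lbrakk> typing G D e1 TBool; typing G D' e2 t; typing G D' e3 t; dom D \<inter> dom D' = {} \<rbrakk>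
         \<Longrightarrow> typing G (D ++ D') (If e1 e2 e3) t"
| pair: "\<lbrakk> typing G D e1 t1; typing G D e2 t2 \<rbrakk> \<Longrightarrow> typing G D (Pair e1 e2) (With t1 t2)"
| proj1: "typing G D e (With t1 t2) \<Longrightarrow> typing G D (Proj1 e) t1"
| proj2: "typing G D e (With t1 t2) \<Longrightarrow> typing G D (Proj2 e) t2"
| tens: "\<lbrakk> typing G D1 e1 t1; typing G D2 e2 t2; dom D1 \<inter> dom D2 = {} \<rbrakk>
         \<Longrightarrow> typing G (D1 ++ D2) (Tens e1 e2) (Tensor t1 t2)"
| lettens: "\<lbrakk> typing (ext None (ext None G)) (ext (Some t2) (ext (Some t1) D)) e t;
              typing G D' e' (Tensor t1 t2); dom D \<inter> dom D' = {} \<rbrakk>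
         \<Longrightarrow> typing G (D ++ D') (LetTens e' e) t"
| lam_nl: "typing (ext (Some t) G) (ext None D) e t' \<Longrightarrow> typing G D (Lam e) (Arrow t t')"
| app_nl: "\<lbrakk> typing G D e (Arrow t' t); typing G Map.empty e' t' \<rbrakk> \<Longrightarrow> typing G D (App e e') t"
| lam_l: "typing (ext None G) (ext (Some t) D) e t' \<Longrightarrow> typing G D (Lam e) (Lolli t t')"
| app_l: "\<lbrakk> typing G D e (Lolli t' t); typing G D' e' t'; dom D \<inter> dom D' = {} \<rbrakk>
         \<Longrightarrow> typing G (D ++ D') (App e e') t"
| val: "typing G D e t \<Longrightarrow> typing G D (Val e) (TMon t)"
| bind_nl: "\<lbrakk> typing G Map.empty e1 (TMon t1); typing (ext (Some t1) G) (ext None D) e2 (TMon t2) \<rbrakk>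
         \<Longrightarrow> typing G D (Bind e1 e2) (TMon t2)"
| bind_l: "\<lbrakk> typing G D e1 (TMon t1); typing (ext None G) (ext (Some t1) D') e2 (TMon t2);
             dom D \<inter> dom D' = {} \<rbrakk>
         \<Longrightarrow> typing G (D ++ D') (Bind e1 e2) (TMon t2)"
| choice: "\<lbrakk> typing G D e1 (TMon t); typing G D e2 (TMon t) \<rbrakk> \<Longrightarrow> typing G D (Choice e1 e2) (TMon t)"

datatype ectx =
    Hole
  | ESucc ectx
  | EPred ectx
  | EIsZero ectx
  | EApp ectx trm
  | EIf ectx trm trm
  | EProj1 ectx
  | EProj2 ectx
  | ELet ectx trm
  | EBind ectx trm
  | EVal ectx

primrec plug :: "ectx \<Rightarrow> trm \<Rightarrow> trm" where
  "plug Hole e = e"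
| "plug (ESucc E) e = App Succ (plug E e)"
| "plug (EPred E) e = App Pred (plug E e)"
| "plug (EIsZero E) e = App IsZero (plug E e)"
| "plug (EApp E e') e = App (plug E e) e'"
| "plug (EIf E e1 e2) e = If (plug E e) e1 e2"
| "plug (EProj1 E) e = Proj1 (plug E e)"
| "plug (EProj2 E) e = Proj2 (plug E e)"
| "plug (ELet E e') e = LetTens (plug E e) e'"
| "plug (EBind E e') e = Bind (plug E e) e'"
| "plug (EVal E) e = Val (plug E e)"

text \<open>The reduction rules, with the irreducibility side condition of the bind rule
  expressed relative to a parameter relation R.\<close>
inductive red_with :: "(trm \<Rightarrow> trm \<Rightarrow> bool) \<Rightarrow> trm \<Rightarrow> trm \<Rightarrow> bool" for R where
  beta: "red_with R (App (Lam e) e') (subst 0 e' e)"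
| fixT: "red_with R (App (Fix t) e) (App e (App (Fix t) e))"
| succ: "red_with R (App Succ (Num n)) (Num (Suc n))"
| pred0: "red_with R (App Pred (Num 0)) (Num 0)"
| predS: "n \<ge> 1 \<Longrightarrow> red_with R (App Pred (Num n)) (Num (n - 1))"
| iszero0: "red_with R (App IsZero (Num 0)) TT"
| iszeroS: "n \<ge> 1 \<Longrightarrow> red_with R (App IsZero (Num n)) FF"
| if_true: "red_with R (If TT e1 e2) e1"
| if_false: "red_with R (If FF e1 e2) e2"
| proj1: "red_with R (Proj1 (Pair e1 e2)) e1"
| proj2: "red_with R (Proj2 (Pair e1 e2)) e2"
| lettens: "red_with R (LetTens (Tens e1 e2) e) (subst 0 e2 (subst 1 (lift 0 e1) e))"
| bind: "\<not> (\<exists>e''. R e' e'') \<Longrightarrow> red_with R (Bind (Val e') e) (App (Lam e) e')"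
| choice1: "red_with R (Choice e1 e2) e1"
| choice2: "red_with R (Choice e1 e2) e2"
| ctx: "red_with R e1 e2 \<Longrightarrow> red_with R (plug E e1) (plug E e2)"

text \<open>The reduction relation is the (unique, stratified) relation with
  step = red_with step; the irreducibility test only concerns proper subterms of the
  redex, so it is defined by well-founded recursion on the size of the source term.\<close>
function step :: "trm \<Rightarrow> trm \<Rightarrow> bool" where
  "step e1 e2 = red_with (\<lambda>a b. if size a < size e1 then step a b else False) e1 e2"
  by auto
termination by (relation "measure (\<lambda>(a, b). size a)") auto

end

theory Submission imports Defs begin

definition ins :: "nat \<Rightarrow> ty option \<Rightarrow> (nat \<rightharpoonup> ty) \<Rightarrow> (nat \<rightharpoonup> ty)" where
  "ins k a M = (\<lambda>n. if n < k then M n else if n = k then a else M (n - 1))"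
definition unins :: "nat \<Rightarrow> (nat \<rightharpoonup> ty) \<Rightarrow> (nat \<rightharpoonup> ty)" where
  "unins k M = (\<lambda>n. if n < k then M n else M (Suc n))"

lemma ext_ins: "ext b (ins k a M) = ins (Suc k) a (ext b M)"
  by (rule ext) (auto simp: ext_def ins_def split: nat.splits)
lemma ins0: "ins 0 a M = ext a M"
  by (rule ext) (auto simp: ext_def ins_def split: nat.splits)
lemma ins_add: "ins k None (M1 ++ M2) = ins k None M1 ++ ins k None M2"
  by (rule ext) (auto simp: ins_def map_add_def split: option.splits)
lemma ins_empty: "ins k None Map.empty = Map.empty"
  by (rule ext) (auto simp: ins_def)
lemma ins_single: "ins k None [x\<mapsto>t] = [(if x<k then x else Suc x) \<mapsto> t]"
  by (rule ext) (auto simp: ins_def)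
lemma ins_dom: "dom M1 \<inter> dom M2 = {} \<Longrightarrow> dom (ins k None M1) \<inter> dom (ins k None M2) = {}"
  by (auto simp: ins_def dom_def split: if_splits)
lemma ins_var: "ins k a G (if x<k then x else Suc x) = G x"
  by (auto simp: ins_def)

lemma unins_ext: "unins (Suc k) (ext a M) = ext a (unins k M)"
  by (rule ext) (auto simp: ext_def unins_def split: nat.splits)
lemma unins0: "unins 0 (ext a M) = M"
  by (rule ext) (auto simp: ext_def unins_def split: nat.splits)
lemma unins_add: "unins k (M1 ++ M2) = unins k M1 ++ unins k M2"
  by (rule ext) (auto simp: unins_def map_add_def split: option.splits)
lemma unins_empty: "unins k Map.empty = Map.empty"
  by (rule ext) (auto simp: unins_def)
lemma unins_single: "x \<noteq> k \<Longrightarrow> unins k [x\<mapsto>t] = [(if x<k then x else x - 1) \<mapsto> t]"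
  by (rule ext) (auto simp: unins_def)
lemma unins_var: "x \<noteq> k \<Longrightarrow> unins k G (if x<k then x else x - 1) = G x"
  by (auto simp: unins_def)
lemma unins_dom: "dom M1 \<inter> dom M2 = {} \<Longrightarrow> dom (unins k M1) \<inter> dom (unins k M2) = {}"
  by (auto simp: unins_def dom_def split: if_splits)
lemma unins_dom_sub: "dom (unins k M1) \<subseteq> dom (unins k (M2 ++ M1))"
  by (auto simp: unins_def dom_def split: if_splits)
lemma unins_dom_sub2: "dom (unins k M1) \<subseteq> dom (unins k (M1 ++ M2))"
  by (auto simp: unins_def dom_def map_add_def split: if_splits option.splits)

lemma ext_add1: "ext a M1 ++ ext None M2 = ext a (M1 ++ M2)"
  by (rule ext) (auto simp: ext_def map_add_def split: nat.splits)
lemma ext_add2: "ext None M1 ++ ext a M2 = ext a (M1 ++ M2)"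
  by (rule ext) (auto simp: ext_def map_add_def split: nat.splits option.splits)
lemma dom_ext: "dom (ext a M) = (if a = None then {} else {0}) \<union> Suc ` dom M"
proof (rule set_eqI)
  fix x show "x \<in> dom (ext a M) \<longleftrightarrow> x \<in> (if a = None then {} else {0}) \<union> Suc ` dom M"
    by (cases x) (auto simp: ext_def)
qed
lemma ext_dom: "dom (ext a M1) \<inter> dom (ext b M2) = {} \<longleftrightarrow> (a = None \<or> b = None) \<and> dom M1 \<inter> dom M2 = {}"
  unfolding dom_ext by auto
lemma lift_typing: "typing G D e t \<Longrightarrow> typing (ins k a G) (ins k None D) (lift k e) t"
proof (induction arbitrary: k a rule: typing.induct)
  case (var_nl G x t)
  have "ins k a G (if x<k then x else Suc x) = Some t" using var_nl by (simp only: ins_var)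
  thus ?case by (cases "x<k") (auto simp: ins_empty intro: typing.var_nl)
next
  case (var_l G x t)
  have "ins k a G (if x<k then x else Suc x) = None" using var_l by (simp only: ins_var)
  hence "typing (ins k a G) [(if x<k then x else Suc x) \<mapsto> t] (Var (if x<k then x else Suc x)) t"
    by (rule typing.var_l)
  moreover have "lift k (Var x) = Var (if x<k then x else Suc x)" by simp
  ultimately show ?case by (simp only: ins_single)
next
  case (ifte G D e1 e2 t e3 D')
  then show ?case by (simp add: ins_add) (rule typing.ifte, auto simp: ins_dom)
next
  case (tens G D1 e1 t1 D2 e2 t2)
  then show ?case by (simp add: ins_add) (rule typing.tens, auto simp: ins_dom)
next
  case (lettens G t2 t1 D e t D' e')
  then show ?case by (simp add: ins_add) (rule typing.lettens, auto simp: ins_dom ext_ins)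
next
  case (lam_nl t G D e t')
  then show ?case by simp (rule typing.lam_nl, simp add: ext_ins)
next
  case (lam_l G t D e t')
  then show ?case by simp (rule typing.lam_l, simp add: ext_ins)
next
  case (app_nl G D e t' t e')
  then show ?case by simp (rule typing.app_nl, auto simp: ins_empty dest: spec)
next
  case (app_l G D e t' t D' e')
  then show ?case by (simp add: ins_add) (rule typing.app_l, auto simp: ins_dom)
next
  case (bind_nl G e1 t1 D e2 t2)
  then show ?case by simp (rule typing.bind_nl, auto simp: ins_empty ext_ins)
next
  case (bind_l G D e1 t1 D' e2 t2)
  then show ?case by (simp add: ins_add) (rule typing.bind_l, auto simp: ins_dom ext_ins)
qed (simp_all add: ins_empty typing.intros, (blast intro: typing.proj1 typing.proj2)+)


lemma ext_Suc[simp]: "ext a M (Suc n) = M n" and ext_0[simp]: "ext a M 0 = a"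
  by (simp_all add: ext_def)

lemma lift0: "typing G D e t \<Longrightarrow> typing (ext a G) (ext None D) (lift 0 e) t"
  using lift_typing[of G D e t 0 a] by (simp add: ins0)
lemma lift0_empty: "typing G Map.empty e t \<Longrightarrow> typing (ext a G) Map.empty (lift 0 e) t"
  using lift_typing[of G Map.empty e t 0 a] by (simp add: ins0 ins_empty)

lemma add_None: "(D1 ++ D2) k = None \<longleftrightarrow> D1 k = None \<and> D2 k = None"
  by (simp add: map_add_def split: option.splits)

lemma subst_nl: "typing G0 D0 e t \<Longrightarrow> D0 k = None \<Longrightarrow>
   (\<forall>s. G0 k = Some s \<longrightarrow> typing (unins k G0) Map.empty e' s) \<Longrightarrow>
   typing (unins k G0) (unins k D0) (subst k e' e) t"
proof (induction arbitrary: k e' rule: typing.induct)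
  case (var_nl G x t)
  show ?case
  proof (cases "x = k")
    case True then show ?thesis using var_nl by (simp add: unins_empty)
  next
    case False
    hence "unins k G (if x<k then x else x - 1) = Some t" using var_nl unins_var[OF False, of G] by simp
    hence "typing (unins k G) Map.empty (Var (if x<k then x else x - 1)) t" by (rule typing.var_nl)
    moreover have "subst k e' (Var x) = Var (if x<k then x else x - 1)" using False by simp
    ultimately show ?thesis by (simp only: unins_empty)
  qed
next
  case (var_l G x t)
  hence xk: "x \<noteq> k" by (auto split: if_splits)
  hence "unins k G (if x<k then x else x - 1) = None" using var_l unins_var[OF xk, of G] by simp
  hence "typing (unins k G) [(if x<k then x else x - 1) \<mapsto> t] (Var (if x<k then x else x - 1)) t"
    by (rule typing.var_l)
  moreover have s1: "subst k e' (Var x) = Var (if x<k then x else x - 1)" using xk by simp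
  ultimately show ?case by (simp only: s1 unins_single[OF xk, of t])
next
  case (ifte G D e1 e2 t e3 D')
  then show ?case by (simp add: unins_add add_None) (rule typing.ifte, auto simp: unins_dom)
next
  case (tens G D1 e1 t1 D2 e2 t2)
  then show ?case by (simp add: unins_add add_None) (rule typing.tens, auto simp: unins_dom)
next
  case (lettens G t2 t1 D e t D' ea)
  show ?case
  proof (simp add: unins_add, rule typing.lettens)
    show "typing (ext None (ext None (unins k G))) (ext (Some t2) (ext (Some t1) (unins k D)))
     (subst (Suc (Suc k)) (lift 0 (lift 0 e')) e) t"
      using lettens.IH(1)[of "Suc (Suc k)" "lift 0 (lift 0 e')"] lettens.prems
      by (auto simp: unins_ext add_None intro!: lift0_empty)
    show "typing (unins k G) (unins k D') (subst k e' ea) (Tensor t1 t2)"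
      using lettens.IH(2) lettens.prems by (auto simp: add_None)
    show "dom (unins k D) \<inter> dom (unins k D') = {}" using lettens.hyps(3) by (rule unins_dom)
  qed
next
  case (lam_nl t G D e t')
  show ?case
    using lam_nl.IH[of "Suc k" "lift 0 e'"] lam_nl.prems
    by (auto simp: unins_ext intro!: lift0_empty typing.lam_nl)
next
  case (lam_l G t D e t')
  show ?case
    using lam_l.IH[of "Suc k" "lift 0 e'"] lam_l.prems
    by (auto simp: unins_ext intro!: lift0_empty typing.lam_l)
next
  case (app_nl G D e t' t e2)
  show ?case
    using app_nl.IH(1)[of k e'] app_nl.IH(2)[of k e'] app_nl.prems
    by (auto simp: unins_empty intro!: typing.app_nl)
next
  case (app_l G D e t' t D' e2)
  then show ?case by (simp add: unins_add add_None) (rule typing.app_l, auto simp: unins_dom)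
next
  case (bind_nl G e1 t1 D e2 t2)
  show ?case
    using bind_nl.IH(1)[of k e'] bind_nl.IH(2)[of "Suc k" "lift 0 e'"] bind_nl.prems
    by (auto simp: unins_empty unins_ext intro!: typing.bind_nl lift0_empty)
next
  case (bind_l G D e1 t1 D' e2 t2)
  show ?case
  proof (simp add: unins_add, rule typing.bind_l)
    show "typing (unins k G) (unins k D) (subst k e' e1) (TMon t1)"
      using bind_l.IH(1) bind_l.prems by (auto simp: add_None)
    show "typing (ext None (unins k G)) (ext (Some t1) (unins k D')) (subst (Suc k) (lift 0 e') e2) (TMon t2)"
      using bind_l.IH(2)[of "Suc k" "lift 0 e'"] bind_l.prems
      by (auto simp: unins_ext add_None intro!: lift0_empty)
    show "dom (unins k D) \<inter> dom (unins k D') = {}" using bind_l.hyps(3) by (rule unins_dom)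
  qed
qed (simp_all add: unins_empty typing.intros, (blast intro: typing.proj1 typing.proj2 typing.pair typing.val typing.choice)+)


lemma split_case:
  assumes d: "dom D \<inter> dom Db = {}" and k: "(D ++ Db) k = Some s"
    and d': "dom (unins k (D ++ Db)) \<inter> dom D' = {}"
    and c1: "D k = Some s \<Longrightarrow> Db k = None \<Longrightarrow> dom (unins k D) \<inter> dom D' = {} \<Longrightarrow>
             dom (unins k D ++ D') \<inter> dom (unins k Db) = {} \<Longrightarrow> Q ((unins k D ++ D') ++ unins k Db)"
    and c2: "D k = None \<Longrightarrow> Db k = Some s \<Longrightarrow> dom (unins k Db) \<inter> dom D' = {} \<Longrightarrow>
             dom (unins k D) \<inter> dom (unins k Db ++ D') = {} \<Longrightarrow> Q (unins k D ++ (unins k Db ++ D'))"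
  shows "Q (unins k (D ++ Db) ++ D')"
proof -
  have dd: "dom (unins k D) \<inter> dom (unins k Db) = {}" using d by (rule unins_dom)
  have a1: "dom (unins k D) \<inter> dom D' = {}" and a2: "dom (unins k Db) \<inter> dom D' = {}"
    using d' by (auto simp: unins_add)
  show ?thesis
  proof (cases "Db k")
    case None
    hence "D k = Some s" using k by (simp add: map_add_def)
    moreover have "(unins k D ++ D') ++ unins k Db = unins k (D ++ Db) ++ D'"
    proof -
      have c: "D' ++ unins k Db = unins k Db ++ D'" using a2 by (metis map_add_comm Int_commute)
      show ?thesis by (simp only: unins_add map_add_assoc[symmetric] c)
    qed
    moreover have "dom (unins k D ++ D') \<inter> dom (unins k Db) = {}" using dd a2 by auto
    ultimately show ?thesis using c1 None a1 by metis
  next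
    case (Some s')
    hence "s' = s" using k by (simp add: map_add_def)
    hence "Db k = Some s" using Some by simp
    moreover have "D k = None" using d Some by auto
    moreover have "unins k D ++ (unins k Db ++ D') = unins k (D ++ Db) ++ D'"
      by (simp add: unins_add map_add_assoc)
    moreover have "dom (unins k D) \<inter> dom (unins k Db ++ D') = {}" using dd a1 by auto
    ultimately show ?thesis using c2 a2 by metis
  qed
qed


lemma snl: "typing G0 D0 e t \<Longrightarrow> D0 k = None \<Longrightarrow> G0 k = None \<Longrightarrow>
   typing (unins k G0) (unins k D0) (subst k e' e) t"
  by (rule subst_nl) auto

lemma unins_single_k: "unins k [k \<mapsto> s] = Map.empty"
  by (rule ext) (auto simp: unins_def)

lemma subst_l: "typing G0 D0 e t \<Longrightarrow> G0 k = None \<Longrightarrow> D0 k = Some s \<Longrightarrow>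
   typing (unins k G0) D' e' s \<Longrightarrow> dom (unins k D0) \<inter> dom D' = {} \<Longrightarrow>
   typing (unins k G0) (unins k D0 ++ D') (subst k e' e) t"
proof (induction arbitrary: k e' D' rule: typing.induct)
  case (var_l G x t)
  hence "x = k" "t = s" by (auto split: if_splits)
  hence e: "unins k [x \<mapsto> t] ++ D' = D'" by (simp only: unins_single_k empty_map_add)
  show ?case unfolding e using var_l \<open>x = k\<close> \<open>t = s\<close> by simp
next
  case (ifte G D e1 Db e2 t e3)
  show ?case
  proof (rule split_case[OF ifte.hyps(4) ifte.prems(2) ifte.prems(4),
      where Q = "\<lambda>Z. typing (unins k G) Z (subst k e' (If e1 e2 e3)) t"])
    assume a: "D k = Some s" "Db k = None" "dom (unins k D) \<inter> dom D' = {}"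
      "dom (unins k D ++ D') \<inter> dom (unins k Db) = {}"
    show "typing (unins k G) ((unins k D ++ D') ++ unins k Db) (subst k e' (If e1 e2 e3)) t"
      using ifte.IH(1)[OF ifte.prems(1) a(1) ifte.prems(3) a(3)]
        snl[OF ifte.hyps(2) a(2) ifte.prems(1)] snl[OF ifte.hyps(3) a(2) ifte.prems(1)] a(4)
      by (simp only: subst.simps) (rule typing.ifte; assumption)
  next
    assume a: "D k = None" "Db k = Some s" "dom (unins k Db) \<inter> dom D' = {}"
      "dom (unins k D) \<inter> dom (unins k Db ++ D') = {}"
    show "typing (unins k G) (unins k D ++ (unins k Db ++ D')) (subst k e' (If e1 e2 e3)) t"
      using ifte.IH(2)[OF ifte.prems(1) a(2) ifte.prems(3) a(3)]
        ifte.IH(3)[OF ifte.prems(1) a(2) ifte.prems(3) a(3)]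
        snl[OF ifte.hyps(1) a(1) ifte.prems(1)] a(4)
      by (simp only: subst.simps) (rule typing.ifte; assumption)
  qed
next
  case (tens G D e1 t1 Db e2 t2)
  show ?case
  proof (rule split_case[OF tens.hyps(3) tens.prems(2) tens.prems(4),
      where Q = "\<lambda>Z. typing (unins k G) Z (subst k e' (Tens e1 e2)) (Tensor t1 t2)"])
    assume a: "D k = Some s" "Db k = None" "dom (unins k D) \<inter> dom D' = {}"
      "dom (unins k D ++ D') \<inter> dom (unins k Db) = {}"
    show "typing (unins k G) ((unins k D ++ D') ++ unins k Db) (subst k e' (Tens e1 e2)) (Tensor t1 t2)"
      using tens.IH(1)[OF tens.prems(1) a(1) tens.prems(3) a(3)]
        snl[OF tens.hyps(2) a(2) tens.prems(1)] a(4)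
      by (simp only: subst.simps) (rule typing.tens; assumption)
  next
    assume a: "D k = None" "Db k = Some s" "dom (unins k Db) \<inter> dom D' = {}"
      "dom (unins k D) \<inter> dom (unins k Db ++ D') = {}"
    show "typing (unins k G) (unins k D ++ (unins k Db ++ D')) (subst k e' (Tens e1 e2)) (Tensor t1 t2)"
      using tens.IH(2)[OF tens.prems(1) a(2) tens.prems(3) a(3)]
        snl[OF tens.hyps(1) a(1) tens.prems(1)] a(4)
      by (simp only: subst.simps) (rule typing.tens; assumption)
  qed
next
  case (app_l G D e t' t Db ea)
  show ?case
  proof (rule split_case[OF app_l.hyps(3) app_l.prems(2) app_l.prems(4),
      where Q = "\<lambda>Z. typing (unins k G) Z (subst k e' (App e ea)) t"])
    assume a: "D k = Some s" "Db k = None" "dom (unins k D) \<inter> dom D' = {}"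
      "dom (unins k D ++ D') \<inter> dom (unins k Db) = {}"
    show "typing (unins k G) ((unins k D ++ D') ++ unins k Db) (subst k e' (App e ea)) t"
      using app_l.IH(1)[OF app_l.prems(1) a(1) app_l.prems(3) a(3)]
        snl[OF app_l.hyps(2) a(2) app_l.prems(1)] a(4)
      by (simp only: subst.simps) (rule typing.app_l; assumption)
  next
    assume a: "D k = None" "Db k = Some s" "dom (unins k Db) \<inter> dom D' = {}"
      "dom (unins k D) \<inter> dom (unins k Db ++ D') = {}"
    show "typing (unins k G) (unins k D ++ (unins k Db ++ D')) (subst k e' (App e ea)) t"
      using app_l.IH(2)[OF app_l.prems(1) a(2) app_l.prems(3) a(3)]
        snl[OF app_l.hyps(1) a(1) app_l.prems(1)] a(4)
      by (simp only: subst.simps) (rule typing.app_l; assumption)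
  qed
next
  case (lettens G t2 t1 D e t Db ea)
  have liftT: "typing (ext None (ext None (unins k G))) (ext None (ext None X)) (lift 0 (lift 0 e')) s"
    if "typing (unins k G) X e' s" for X
    using lift0[OF lift0[OF that]] .
  have body_sub: "typing (ext None (ext None (unins k G))) (ext (Some t2) (ext (Some t1) (unins k D)))
     (subst (Suc (Suc k)) (lift 0 (lift 0 e')) e) t" if "D k = None"
    using snl[OF lettens.hyps(1), of "Suc (Suc k)"] that lettens.prems(1)
    by (simp add: unins_ext)
  show ?case
  proof (rule split_case[OF lettens.hyps(3) lettens.prems(2) lettens.prems(4),
      where Q = "\<lambda>Z. typing (unins k G) Z (subst k e' (LetTens ea e)) t"])
    assume a: "D k = Some s" "Db k = None" "dom (unins k D) \<inter> dom D' = {}"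
      "dom (unins k D ++ D') \<inter> dom (unins k Db) = {}"
    have "typing (unins (Suc (Suc k)) (ext None (ext None G)))
       (unins (Suc (Suc k)) (ext (Some t2) (ext (Some t1) D)) ++ ext None (ext None D'))
       (subst (Suc (Suc k)) (lift 0 (lift 0 e')) e) t"
      using lettens.IH(1)[of "Suc (Suc k)" "ext None (ext None D')" "lift 0 (lift 0 e')"]
        lettens.prems(1) a(1,3) liftT[OF lettens.prems(3)]
      by (simp add: unins_ext ext_dom)
    hence "typing (ext None (ext None (unins k G))) (ext (Some t2) (ext (Some t1) (unins k D ++ D')))
       (subst (Suc (Suc k)) (lift 0 (lift 0 e')) e) t"
      by (simp add: unins_ext ext_add1)
    then show "typing (unins k G) ((unins k D ++ D') ++ unins k Db) (subst k e' (LetTens ea e)) t"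
      using snl[OF lettens.hyps(2) a(2) lettens.prems(1)] a(4)
      by (simp only: subst.simps) (rule typing.lettens; assumption)
  next
    assume a: "D k = None" "Db k = Some s" "dom (unins k Db) \<inter> dom D' = {}"
      "dom (unins k D) \<inter> dom (unins k Db ++ D') = {}"
    show "typing (unins k G) (unins k D ++ (unins k Db ++ D')) (subst k e' (LetTens ea e)) t"
      using lettens.IH(2)[OF lettens.prems(1) a(2) lettens.prems(3) a(3)]
        body_sub[OF a(1)] a(4)
      by (simp only: subst.simps) (rule typing.lettens; assumption)
  qed
next
  case (bind_l G D e1 t1 Db e2 t2)
  show ?case
  proof (rule split_case[OF bind_l.hyps(3) bind_l.prems(2) bind_l.prems(4),
      where Q = "\<lambda>Z. typing (unins k G) Z (subst k e' (Bind e1 e2)) (TMon t2)"])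
    assume a: "D k = Some s" "Db k = None" "dom (unins k D) \<inter> dom D' = {}"
      "dom (unins k D ++ D') \<inter> dom (unins k Db) = {}"
    have "typing (ext None (unins k G)) (ext (Some t1) (unins k Db)) (subst (Suc k) (lift 0 e') e2) (TMon t2)"
      using snl[OF bind_l.hyps(2), of "Suc k"] a(2) bind_l.prems(1) by (simp add: unins_ext)
    then show "typing (unins k G) ((unins k D ++ D') ++ unins k Db) (subst k e' (Bind e1 e2)) (TMon t2)"
      using bind_l.IH(1)[OF bind_l.prems(1) a(1) bind_l.prems(3) a(3)] a(4)
      by (simp only: subst.simps) (rule typing.bind_l; assumption)
  next
    assume a: "D k = None" "Db k = Some s" "dom (unins k Db) \<inter> dom D' = {}"
      "dom (unins k D) \<inter> dom (unins k Db ++ D') = {}"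
    have "typing (unins (Suc k) (ext None G)) (unins (Suc k) (ext (Some t1) Db) ++ ext None D')
       (subst (Suc k) (lift 0 e') e2) (TMon t2)"
      using bind_l.IH(2)[of "Suc k" "ext None D'" "lift 0 e'"] bind_l.prems(1) a(2,3)
        lift0[OF bind_l.prems(3)]
      by (simp add: unins_ext ext_dom)
    hence "typing (ext None (unins k G)) (ext (Some t1) (unins k Db ++ D'))
       (subst (Suc k) (lift 0 e') e2) (TMon t2)"
      by (simp add: unins_ext ext_add1)
    then show "typing (unins k G) (unins k D ++ (unins k Db ++ D')) (subst k e' (Bind e1 e2)) (TMon t2)"
      using snl[OF bind_l.hyps(1) a(1) bind_l.prems(1)] a(4)
      by (simp only: subst.simps) (rule typing.bind_l; assumption)
  qed
next
  case (lam_nl t G D e t')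
  have "typing (unins (Suc k) (ext (Some t) G)) (unins (Suc k) (ext None D) ++ ext None D')
       (subst (Suc k) (lift 0 e') e) t'"
    using lam_nl.IH[of "Suc k" "ext None D'" "lift 0 e'"] lam_nl.prems lift0[OF lam_nl.prems(3)]
    by (simp add: unins_ext ext_dom)
  hence "typing (ext (Some t) (unins k G)) (ext None (unins k D ++ D')) (subst (Suc k) (lift 0 e') e) t'"
    by (simp add: unins_ext ext_add1)
  then show ?case by (simp only: subst.simps) (rule typing.lam_nl; assumption)
next
  case (lam_l G t D e t')
  have "typing (unins (Suc k) (ext None G)) (unins (Suc k) (ext (Some t) D) ++ ext None D')
       (subst (Suc k) (lift 0 e') e) t'"
    using lam_l.IH[of "Suc k" "ext None D'" "lift 0 e'"] lam_l.prems lift0[OF lam_l.prems(3)]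
    by (simp add: unins_ext ext_dom)
  hence "typing (ext None (unins k G)) (ext (Some t) (unins k D ++ D')) (subst (Suc k) (lift 0 e') e) t'"
    by (simp add: unins_ext ext_add1)
  then show ?case by (simp only: subst.simps) (rule typing.lam_l; assumption)
next
  case (app_nl G D e t' t ea)
  show ?case
    using app_nl.IH(1)[OF app_nl.prems] snl[OF app_nl.hyps(2) _ app_nl.prems(1)]
    by (auto simp: unins_empty intro: typing.app_nl)
next
  case (bind_nl G e1 t1 D e2 t2)
  have "typing (unins (Suc k) (ext (Some t1) G)) (unins (Suc k) (ext None D) ++ ext None D')
       (subst (Suc k) (lift 0 e') e2) (TMon t2)"
    using bind_nl.IH(2)[of "Suc k" "ext None D'" "lift 0 e'"] bind_nl.prems lift0[OF bind_nl.prems(3)]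
    by (simp add: unins_ext ext_dom)
  hence "typing (ext (Some t1) (unins k G)) (ext None (unins k D ++ D')) (subst (Suc k) (lift 0 e') e2) (TMon t2)"
    by (simp add: unins_ext ext_add1)
  then show ?case using snl[OF bind_nl.hyps(1) _ bind_nl.prems(1)]
    by (auto simp: unins_empty intro: typing.bind_nl)
next
  case (pair G D e1 t1 e2 t2)
  then show ?case by (simp only: subst.simps) (rule typing.pair; assumption)
next
  case (proj1 G D e t1 t2)
  then show ?case by (simp only: subst.simps) (rule typing.proj1; assumption)
next
  case (proj2 G D e t1 t2)
  then show ?case by (simp only: subst.simps) (rule typing.proj2; assumption)
next
  case (val G D e t)
  then show ?case by (simp only: subst.simps) (rule typing.val; assumption)
next
  case (choice G D e1 t e2)
  then show ?case by (simp only: subst.simps) (rule typing.choice; assumption)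
qed auto


inductive_cases appE: "typing G D (App e1 e2) t"
inductive_cases lamArrE: "typing G D (Lam e) (Arrow t1 t2)"
inductive_cases lamLolE: "typing G D (Lam e) (Lolli t1 t2)"
inductive_cases fixE: "typing G D (Fix t') t"
inductive_cases succE: "typing G D Succ t"
inductive_cases predE: "typing G D Pred t"
inductive_cases iszeroE: "typing G D IsZero t"
inductive_cases numE: "typing G D (Num n) t"
inductive_cases ttE: "typing G D TT t"
inductive_cases ffE: "typing G D FF t"
inductive_cases ifE: "typing G D (If e1 e2 e3) t"
inductive_cases pairE: "typing G D (Pair e1 e2) t"
inductive_cases proj1E: "typing G D (Proj1 e) t"
inductive_cases proj2E: "typing G D (Proj2 e) t"
inductive_cases tensE: "typing G D (Tens e1 e2) t"
inductive_cases letE: "typing G D (LetTens e1 e2) t"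
inductive_cases valE: "typing G D (Val e) t"
inductive_cases bindE: "typing G D (Bind e1 e2) t"
inductive_cases choiceE: "typing G D (Choice e1 e2) t"

lemma beta_nl: "typing (ext (Some t') G) (ext None D) e t \<Longrightarrow> typing G Map.empty e2 t' \<Longrightarrow>
  typing G D (subst 0 e2 e) t"
  using subst_nl[of "ext (Some t') G" "ext None D" e t 0 e2] by (simp add: unins0)

lemma beta_l: "typing (ext None G) (ext (Some t') D) e t \<Longrightarrow> typing G D' e2 t' \<Longrightarrow>
  dom D \<inter> dom D' = {} \<Longrightarrow> typing G (D ++ D') (subst 0 e2 e) t"
  using subst_l[of "ext None G" "ext (Some t') D" e t 0 t' D' e2] by (simp add: unins0)


lemma plug_pres: "(\<And>G D t. typing G D e1 t \<Longrightarrow> typing G D e2 t) \<Longrightarrow>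
  typing G D (plug E e1) t \<Longrightarrow> typing G D (plug E e2) t"
proof (induction E arbitrary: G D t)
  case Hole then show ?case by simp
next
  case (ESucc E) then show ?case by (auto elim!: appE intro: typing.app_nl typing.app_l)
next
  case (EPred E) then show ?case by (auto elim!: appE intro: typing.app_nl typing.app_l)
next
  case (EIsZero E) then show ?case by (auto elim!: appE intro: typing.app_nl typing.app_l)
next
  case (EApp E x) then show ?case by (auto elim!: appE intro: typing.app_nl typing.app_l)
next
  case (EIf E x1 x2) then show ?case by (auto elim!: ifE intro: typing.ifte)
next
  case (EProj1 E) then show ?case by (auto elim!: proj1E intro: typing.proj1)
next
  case (EProj2 E) then show ?case by (auto elim!: proj2E intro: typing.proj2)
next
  case (ELet E x) then show ?case by (auto elim!: letE intro: typing.lettens)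
next
  case (EBind E x) then show ?case by (auto elim!: bindE intro: typing.bind_nl typing.bind_l)
next
  case (EVal E) then show ?case by (auto elim!: valE intro: typing.val)
qed

lemma sr: "red_with R e e' \<Longrightarrow> typing G D e t \<Longrightarrow> typing G D e' t"
proof (induction arbitrary: G D t rule: red_with.induct)
  case (beta e e2)
  from beta.prems show ?case
    by (auto elim!: appE lamArrE lamLolE intro: beta_nl beta_l)
next
  case (fixT ty e)
  from fixT.prems show ?case
    by (auto elim!: appE fixE intro!: typing.app_nl typing.fixT)
next
  case (succ n) then show ?case by (auto elim!: appE succE numE intro: typing.num)
next
  case pred0 then show ?case by (auto elim!: appE predE numE intro: typing.num)
next
  case (predS n) then show ?case by (auto elim!: appE predE numE intro: typing.num)
next
  case iszero0 then show ?case by (auto elim!: appE iszeroE numE intro: typing.tt)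
next
  case (iszeroS n) then show ?case by (auto elim!: appE iszeroE numE intro: typing.ff)
next
  case (if_true e1 e2) then show ?case by (auto elim!: ifE ttE)
next
  case (if_false e1 e2) then show ?case by (auto elim!: ifE ffE)
next
  case (proj1 e1 e2) then show ?case by (auto elim!: proj1E pairE)
next
  case (proj2 e1 e2) then show ?case by (auto elim!: proj2E pairE)
next
  case (lettens e1 e2 e)
  obtain t1 t2 Da D1 D2 where h: "typing (ext None (ext None G)) (ext (Some t2) (ext (Some t1) Da)) e t"
      "dom Da \<inter> dom (D1 ++ D2) = {}" "D = Da ++ (D1 ++ D2)"
      "typing G D1 e1 t1" "typing G D2 e2 t2" "dom D1 \<inter> dom D2 = {}"
    using lettens.prems by (elim letE tensE) auto
    have u1: "unins 1 (ext a (ext b M)) = ext a M" for a b M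
      by (rule ext) (auto simp: unins_def ext_def split: nat.splits)
    have l1: "typing (ext None G) (ext None D1) (lift 0 e1) t1" using lift0[OF h(4)] .
    have "typing (unins 1 (ext None (ext None G))) (unins 1 (ext (Some t2) (ext (Some t1) Da)) ++ ext None D1)
       (subst 1 (lift 0 e1) e) t"
    proof (rule subst_l[OF h(1)])
      show "ext None (ext None G) 1 = None" by (simp add: One_nat_def)
      show "ext (Some t2) (ext (Some t1) Da) 1 = Some t1" by (simp add: One_nat_def)
      show "typing (unins 1 (ext None (ext None G))) (ext None D1) (lift 0 e1) t1"
        using l1 u1 by simp
      show "dom (unins 1 (ext (Some t2) (ext (Some t1) Da))) \<inter> dom (ext None D1) = {}"
        using h(2) u1 by (auto simp: ext_dom)
    qed
    hence "typing (ext None G) (ext (Some t2) (Da ++ D1)) (subst 1 (lift 0 e1) e) t"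
      by (simp add: u1 unins_ext unins0 ext_add1)
    moreover have "dom (Da ++ D1) \<inter> dom D2 = {}" using h(2,6) by auto
    ultimately have "typing G ((Da ++ D1) ++ D2) (subst 0 e2 (subst 1 (lift 0 e1) e)) t"
      using beta_l h(5) by blast
    thus ?case using h(3) by (simp add: map_add_assoc)
next
  case (bind e2 e)
  have c1: "typing G D (App (Lam e) e2) (TMon t2)" if "typing G Map.empty e2 t1"
      "typing (ext (Some t1) G) (ext None D) e (TMon t2)" for t1 t2
    using that by (auto intro: typing.lam_nl typing.app_nl)
  have c2: "typing G (Da ++ Db) (App (Lam e) e2) (TMon t2)" if h: "typing G Da e2 t1"
      "typing (ext None G) (ext (Some t1) Db) e (TMon t2)"
      "dom Da \<inter> dom Db = {}" for t1 t2 Da Db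
  proof -
    have "typing G (Db ++ Da) (App (Lam e) e2) (TMon t2)"
      using h by (auto intro: typing.lam_l typing.app_l)
    thus ?thesis using h(3) by (metis map_add_comm)
  qed
  from bind.prems show ?case by (elim bindE valE) (blast intro: c1 c2)+
next
  case (choice1 e1 e2) then show ?case by (auto elim!: choiceE)
next
  case (choice2 e1 e2) then show ?case by (auto elim!: choiceE)
next
  case (ctx e1 e2 E)
  then show ?case using plug_pres by blast
qed

theorem proposition5:
  assumes "typing G D e t"
      and "step e e'"
  shows "typing G D e' t"
  using assms(2) assms(1) by (simp add: sr)

end
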